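(* Let $\mathscr K$ be a quasivariety of structures, let $\mathbf F$ be a $\mathscr K$-free structure, and let $\varepsilon$ be an endomorphism of $\mathbf F$. Let $\alpha,\beta_1,\dots,\beta_m$ be atomic formulae over $\mathbf F$. If, in the lattice $\operatorname{Con}_{\mathscr K}\mathbf F$, \[ \operatorname{con}_{\mathscr K}\alpha \le \bigvee_{j=1}^m \operatorname{con}_{\mathscr K}\beta_j, \] then \[ \operatorname{con}_{\mathscr K}(\varepsilon\alpha) \le \bigvee_{j=1}^m \operatorname{con}_{\mathscr K}(\varepsilon\beta_j). \]
   Context: Structures have a signature consisting of function symbols and relation symbols with arities; homomorphisms preserve operations and map relations into relations. A congruence on a structure $\mathbf A$ is a pair $\theta=\langle\theta_0,\theta_1\rangle$ where $\theta_0$ is an equivalence relation on $A$ compatible with the operations, and $\theta_1=\bigcup_R\theta_1^R$ where for each relation symbol $R$ of arity $n$, $R^{\mathbf A}\subseteq\theta_1^R\subseteq A^n$ and $\theta_1^R$ is closed under componentwise $\theta_0$-equivalence. Quotient structures $\mathbf A/\theta$ are formed in the natural way. A quasivariety is a class of structures closed under substructures, direct products and ultraproducts (equivalently, the class of models of a set of quasi-identities $\&_{i}\alpha_i\Rightarrow\beta$ with atomic $\alpha_i,\beta$); equality is interpreted as true equality. An atomic formula over $\mathbf F$ is either $s\approx t$ with $s,t\in F$ or $R(\mathbf s)$ with $R$ a relation symbol and $\mathbf s$ a tuple of elements of $F$ of the arity of $R$. A congruence $\psi$ of $\mathbf F$ is a $\mathscr K$-congruence if $\mathbf F/\psi\in\mathscr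 K$; these form the complete lattice $\operatorname{Con}_{\mathscr K}\mathbf F$. We write $\alpha\in\psi$ if $\alpha$ is $s\approx t$ with $(s,t)\in\psi_0$, or $\alpha$ is $R(\mathbf s)$ with $\mathbf s\in\psi_1^R$. For a set $S$ of atomic formulae, $\operatorname{con}_{\mathscr K}S$ is the intersection of all congruences $\psi$ of $\mathbf F$ with $\mathbf F/\psi\in\mathscr K$ and $S\subseteq\psi$. For an endomorphism $\varepsilon$, $\varepsilon\alpha$ denotes $\varepsilon s\approx\varepsilon t$ if $\alpha$ is $s\approx t$, and $R(\varepsilon\mathbf s)$ (componentwise) if $\alpha$ is $R(\mathbf s)$. *)

theory Defs
  imports Main
begin

text \<open>A signature is given by an arity function fa for function symbols (type 'f)
  and an arity function ra for relation symbols (type 'r).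
  Operations and relations act on lists of arguments.\<close>

record ('a, 'f, 'r) struct =
  carrier :: "'a set"
  fun_of  :: "'f \<Rightarrow> 'a list \<Rightarrow> 'a"
  rel_of  :: "'r \<Rightarrow> 'a list set"

definition tuples :: "'a set \<Rightarrow> nat \<Rightarrow> 'a list set" where
  "tuples A n = {xs. length xs = n \<and> set xs \<subseteq> A}"

definition wf_struct :: "('f \<Rightarrow> nat) \<Rightarrow> ('r \<Rightarrow> nat) \<Rightarrow> ('a, 'f, 'r) struct \<Rightarrow> bool" where
  "wf_struct fa ra A \<longleftrightarrow>
     (\<forall>f. \<forall>xs \<in> tuples (carrier A) (fa f). fun_of A f xs \<in> carrier A) \<and>
     (\<forall>R. rel_of A R \<subseteq> tuples (carrier A) (ra R))"

definition hom :: "('f \<Rightarrow> nat) \<Rightarrow> ('r \<Rightarrow> nat) \<Rightarrow> ('a, 'f, 'r) struct \<Rightarrow> ('b, 'f, 'r) struct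
                   \<Rightarrow> ('a \<Rightarrow> 'b) \<Rightarrow> bool" where
  "hom fa ra A B h \<longleftrightarrow>
     h ` carrier A \<subseteq> carrier B \<and>
     (\<forall>f. \<forall>xs \<in> tuples (carrier A) (fa f). h (fun_of A f xs) = fun_of B f (map h xs)) \<and>
     (\<forall>R. \<forall>xs \<in> rel_of A R. map h xs \<in> rel_of B R)"

definition endo :: "('f \<Rightarrow> nat) \<Rightarrow> ('r \<Rightarrow> nat) \<Rightarrow> ('a, 'f, 'r) struct \<Rightarrow> ('a \<Rightarrow> 'a) \<Rightarrow> bool" where
  "endo fa ra A h \<longleftrightarrow> hom fa ra A A h"

datatype ('v, 'f) trm = Var 'v | App 'f "('v, 'f) trm list"

datatype ('v, 'f, 'r) atom = AtEq "('v, 'f) trm" "('v, 'f) trm" | AtRel 'r "('v, 'f) trm list"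

fun wf_trm :: "('f \<Rightarrow> nat) \<Rightarrow> ('v, 'f) trm \<Rightarrow> bool" where
  "wf_trm fa (Var v) = True"
| "wf_trm fa (App f ts) = (length ts = fa f \<and> (\<forall>t \<in> set ts. wf_trm fa t))"

fun wf_atom :: "('f \<Rightarrow> nat) \<Rightarrow> ('r \<Rightarrow> nat) \<Rightarrow> ('v, 'f, 'r) atom \<Rightarrow> bool" where
  "wf_atom fa ra (AtEq s t) = (wf_trm fa s \<and> wf_trm fa t)"
| "wf_atom fa ra (AtRel R ts) = (length ts = ra R \<and> (\<forall>t \<in> set ts. wf_trm fa t))"

fun eval :: "('a, 'f, 'r) struct \<Rightarrow> ('v \<Rightarrow> 'a) \<Rightarrow> ('v, 'f) trm \<Rightarrow> 'a" where
  "eval A \<sigma> (Var v) = \<sigma> v"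
| "eval A \<sigma> (App f ts) = fun_of A f (map (eval A \<sigma>) ts)"

fun holds :: "('a, 'f, 'r) struct \<Rightarrow> ('v \<Rightarrow> 'a) \<Rightarrow> ('v, 'f, 'r) atom \<Rightarrow> bool" where
  "holds A \<sigma> (AtEq s t) = (eval A \<sigma> s = eval A \<sigma> t)"
| "holds A \<sigma> (AtRel R ts) = (map (eval A \<sigma>) ts \<in> rel_of A R)"

text \<open>A quasi-identity  \<open>&_i \<alpha>_i \<Rightarrow> \<beta>\<close>  (finitely many premises, variables from nat).\<close>

type_synonym ('f, 'r) qid = "(nat, 'f, 'r) atom list \<times> (nat, 'f, 'r) atom"

definition wf_qid :: "('f \<Rightarrow> nat) \<Rightarrow> ('r \<Rightarrow> nat) \<Rightarrow> ('f, 'r) qid \<Rightarrow> bool" where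
  "wf_qid fa ra q \<longleftrightarrow> (\<forall>a \<in> set (fst q). wf_atom fa ra a) \<and> wf_atom fa ra (snd q)"

definition sat_qid :: "('a, 'f, 'r) struct \<Rightarrow> ('f, 'r) qid \<Rightarrow> bool" where
  "sat_qid A q \<longleftrightarrow>
     (\<forall>\<sigma>. range \<sigma> \<subseteq> carrier A \<longrightarrow> (\<forall>a \<in> set (fst q). holds A \<sigma> a) \<longrightarrow> holds A \<sigma> (snd q))"

text \<open>The quasivariety K determined by a set Sigma of quasi-identities: membership of a structure
  (of arbitrary carrier type) in K.\<close>

definition inK :: "('f \<Rightarrow> nat) \<Rightarrow> ('r \<Rightarrow> nat) \<Rightarrow> ('f, 'r) qid set \<Rightarrow> ('a, 'f, 'r) struct \<Rightarrow> bool" where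
  "inK fa ra \<Sigma> A \<longleftrightarrow> wf_struct fa ra A \<and> (\<forall>q \<in> \<Sigma>. sat_qid A q)"

inductive_set generated :: "('a, 'f, 'r) struct \<Rightarrow> ('f \<Rightarrow> nat) \<Rightarrow> 'a set \<Rightarrow> 'a set"
  for A fa X where
  gen_base: "x \<in> X \<Longrightarrow> x \<in> generated A fa X"
| gen_app: "length xs = fa f \<Longrightarrow> (\<forall>x \<in> set xs. x \<in> generated A fa X) \<Longrightarrow> fun_of A f xs \<in> generated A fa X"

text \<open>Target structures range over all
  carrier types 'b (the type is an explicit parameter).\<close>

definition Kfree :: "('f \<Rightarrow> nat) \<Rightarrow> ('r \<Rightarrow> nat) \<Rightarrow> ('f, 'r) qid set \<Rightarrow> ('a, 'f, 'r) struct
                      \<Rightarrow> 'b itself \<Rightarrow> bool" where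
  "Kfree fa ra \<Sigma> F (TYPE('b)) \<longleftrightarrow>
     inK fa ra \<Sigma> F \<and>
     (\<exists>X \<subseteq> carrier F. generated F fa X = carrier F \<and>
        (\<forall>(A :: ('b, 'f, 'r) struct) g. inK fa ra \<Sigma> A \<longrightarrow> g ` X \<subseteq> carrier A \<longrightarrow>
            (\<exists>h. hom fa ra F A h \<and> (\<forall>x \<in> X. h x = g x))))"

type_synonym ('a, 'r) cong = "('a \<times> 'a) set \<times> ('r \<Rightarrow> 'a list set)"

definition is_cong :: "('f \<Rightarrow> nat) \<Rightarrow> ('r \<Rightarrow> nat) \<Rightarrow> ('a, 'f, 'r) struct \<Rightarrow> ('a, 'r) cong \<Rightarrow> bool" where
  "is_cong fa ra A \<theta> \<longleftrightarrow>
     equiv (carrier A) (fst \<theta>) \<and>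
     (\<forall>f. \<forall>xs \<in> tuples (carrier A) (fa f). \<forall>ys \<in> tuples (carrier A) (fa f).
         list_all2 (\<lambda>x y. (x, y) \<in> fst \<theta>) xs ys \<longrightarrow> (fun_of A f xs, fun_of A f ys) \<in> fst \<theta>) \<and>
     (\<forall>R. rel_of A R \<subseteq> snd \<theta> R \<and> snd \<theta> R \<subseteq> tuples (carrier A) (ra R) \<and>
         (\<forall>xs ys. xs \<in> snd \<theta> R \<longrightarrow> list_all2 (\<lambda>x y. (x, y) \<in> fst \<theta>) xs ys \<longrightarrow> ys \<in> snd \<theta> R))"

definition quot :: "('a, 'f, 'r) struct \<Rightarrow> ('a, 'r) cong \<Rightarrow> ('a set, 'f, 'r) struct" where
  "quot A \<theta> =
     \<lparr> carrier = carrier A // fst \<theta>,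
       fun_of = (\<lambda>f Xs. fst \<theta> `` {fun_of A f (map (\<lambda>X. SOME x. x \<in> X) Xs)}),
       rel_of = (\<lambda>R. {map (\<lambda>x. fst \<theta> `` {x}) xs | xs. xs \<in> snd \<theta> R}) \<rparr>"

definition is_Kcong :: "('f \<Rightarrow> nat) \<Rightarrow> ('r \<Rightarrow> nat) \<Rightarrow> ('f, 'r) qid set \<Rightarrow> ('a, 'f, 'r) struct
                        \<Rightarrow> ('a, 'r) cong \<Rightarrow> bool" where
  "is_Kcong fa ra \<Sigma> A \<psi> \<longleftrightarrow> is_cong fa ra A \<psi> \<and> inK fa ra \<Sigma> (quot A \<psi>)"

definition cong_le :: "('a, 'r) cong \<Rightarrow> ('a, 'r) cong \<Rightarrow> bool" where
  "cong_le \<theta> \<psi> \<longleftrightarrow> fst \<theta> \<subseteq> fst \<psi> \<and> (\<forall>R. snd \<theta> R \<subseteq> snd \<psi> R)"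

definition cong_Inf :: "('a, 'r) cong set \<Rightarrow> ('a, 'r) cong" where
  "cong_Inf S = (\<Inter>\<psi> \<in> S. fst \<psi>, \<lambda>R. \<Inter>\<psi> \<in> S. snd \<psi> R)"

datatype ('a, 'r) afml = FEq 'a 'a | FRel 'r "'a list"

fun wf_afml :: "('r \<Rightarrow> nat) \<Rightarrow> ('a, 'f, 'r) struct \<Rightarrow> ('a, 'r) afml \<Rightarrow> bool" where
  "wf_afml ra A (FEq s t) = (s \<in> carrier A \<and> t \<in> carrier A)"
| "wf_afml ra A (FRel R ss) = (ss \<in> tuples (carrier A) (ra R))"

fun in_cong :: "('a, 'r) afml \<Rightarrow> ('a, 'r) cong \<Rightarrow> bool" where
  "in_cong (FEq s t) \<psi> = ((s, t) \<in> fst \<psi>)"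
| "in_cong (FRel R ss) \<psi> = (ss \<in> snd \<psi> R)"

fun map_afml :: "('a \<Rightarrow> 'a) \<Rightarrow> ('a, 'r) afml \<Rightarrow> ('a, 'r) afml" where
  "map_afml \<epsilon> (FEq s t) = FEq (\<epsilon> s) (\<epsilon> t)"
| "map_afml \<epsilon> (FRel R ss) = FRel R (map \<epsilon> ss)"

definition conK :: "('f \<Rightarrow> nat) \<Rightarrow> ('r \<Rightarrow> nat) \<Rightarrow> ('f, 'r) qid set \<Rightarrow> ('a, 'f, 'r) struct
                    \<Rightarrow> ('a, 'r) afml set \<Rightarrow> ('a, 'r) cong" where
  "conK fa ra \<Sigma> A S = cong_Inf {\<psi>. is_Kcong fa ra \<Sigma> A \<psi> \<and> (\<forall>\<alpha> \<in> S. in_cong \<alpha> \<psi>)}"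

definition KSup :: "('f \<Rightarrow> nat) \<Rightarrow> ('r \<Rightarrow> nat) \<Rightarrow> ('f, 'r) qid set \<Rightarrow> ('a, 'f, 'r) struct
                    \<Rightarrow> ('a, 'r) cong set \<Rightarrow> ('a, 'r) cong" where
  "KSup fa ra \<Sigma> A C = cong_Inf {\<phi>. is_Kcong fa ra \<Sigma> A \<phi> \<and> (\<forall>\<psi> \<in> C. cong_le \<psi> \<phi>)}"

end

theory Submission
  imports Defs
begin

fun holdsC :: "('a, 'f, 'r) struct \<Rightarrow> ('a, 'r) cong \<Rightarrow> ('v \<Rightarrow> 'a) \<Rightarrow> ('v, 'f, 'r) atom \<Rightarrow> bool" where
  "holdsC A \<theta> \<rho> (AtEq s t) = ((eval A \<rho> s, eval A \<rho> t) \<in> fst \<theta>)"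
| "holdsC A \<theta> \<rho> (AtRel R ts) = (map (eval A \<rho>) ts \<in> snd \<theta> R)"

definition pick :: "'a set \<Rightarrow> 'a" where "pick X = (SOME x. x \<in> X)"

lemma eval_carrier:
  assumes "wf_struct fa ra F" "range \<rho> \<subseteq> carrier F"
  shows "wf_trm fa t \<Longrightarrow> eval F \<rho> t \<in> carrier F"
proof (induction t)
  case (Var v) then show ?case using assms by auto
next
  case (App f ts)
  then have "map (eval F \<rho>) ts \<in> tuples (carrier F) (fa f)"
    by (auto simp: tuples_def)
  then show ?case using assms(1) by (auto simp: wf_struct_def)
qed

lemma eval_hom:
  assumes "hom fa ra F F \<epsilon>" "wf_struct fa ra F" "range \<rho> \<subseteq> carrier F"
  shows "wf_trm fa t \<Longrightarrow> eval F (\<epsilon> \<circ> \<rho>) t = \<epsilon> (eval F \<rho> t)"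
proof (induction t)
  case (Var v) then show ?case by auto
next
  case (App f ts)
  have tp: "map (eval F \<rho>) ts \<in> tuples (carrier F) (fa f)"
    using App.prems eval_carrier[OF assms(2,3)] by (auto simp: tuples_def)
  have "map (eval F (\<epsilon> \<circ> \<rho>)) ts = map \<epsilon> (map (eval F \<rho>) ts)"
    using App by (auto simp: comp_def)
  then show ?case using assms(1) tp unfolding hom_def by (metis eval.simps(2))
qed

lemma cls_pick:
  assumes "equiv A r" "X \<in> A // r"
  shows "pick X \<in> X" "pick X \<in> A" "r `` {pick X} = X"
proof -
  obtain x where x: "x \<in> A" "X = r `` {x}" using assms(2) by (auto elim: quotientE)
  then have "x \<in> X" using assms(1) equiv_class_self by metis
  then show px: "pick X \<in> X" unfolding pick_def by (rule someI)
  then show "pick X \<in> A" using x assms(1) by (auto dest: equiv_class_eq_iff[THEN iffD1, OF assms(1)] simp: equiv_def refl_on_def)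
  show "r `` {pick X} = X" using x px assms(1)
    by (metis equiv_class_eq_iff equiv_class_self quotientI quotient_eq_iff)
qed

lemma cong_equiv: "is_cong fa ra F \<theta> \<Longrightarrow> equiv (carrier F) (fst \<theta>)"
  by (simp add: is_cong_def)

lemma cong_in: "is_cong fa ra F \<theta> \<Longrightarrow> (x, y) \<in> fst \<theta> \<Longrightarrow> x \<in> carrier F \<and> y \<in> carrier F"
  by (auto simp: is_cong_def equiv_def refl_on_def)

lemma eval_quot:
  assumes c: "is_cong fa ra F \<theta>" and w: "wf_struct fa ra F"
    and s: "range \<sigma> \<subseteq> carrier F // fst \<theta>"
  shows "wf_trm fa t \<Longrightarrow> eval (quot F \<theta>) \<sigma> t = fst \<theta> `` {eval F (pick \<circ> \<sigma>) t}"
proof (induction t)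
  case (Var v)
  have "\<sigma> v \<in> carrier F // fst \<theta>" using s by auto
  then show ?case using cls_pick[OF cong_equiv[OF c]] by simp
next
  case (App f ts)
  have eq: "equiv (carrier F) (fst \<theta>)" using cong_equiv[OF c] .
  have rng: "range (pick \<circ> \<sigma>) \<subseteq> carrier F" using s cls_pick(2)[OF eq] by auto
  define es where "es = map (eval F (pick \<circ> \<sigma>)) ts"
  have escar: "es \<in> tuples (carrier F) (fa f)"
    using App.prems eval_carrier[OF w rng] by (auto simp: tuples_def es_def)
  have m: "map (eval (quot F \<theta>) \<sigma>) ts = map (\<lambda>e. fst \<theta> `` {e}) es"
    using App by (auto simp: es_def comp_def)
  define ps where "ps = map (\<lambda>e. pick (fst \<theta> `` {e})) es"
  have pe: "\<forall>e \<in> carrier F. (pick (fst \<theta> `` {e}), e) \<in> fst \<theta>"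
  proof
    fix e assume "e \<in> carrier F"
    then have "fst \<theta> `` {e} \<in> carrier F // fst \<theta>" by (rule quotientI)
    from cls_pick[OF eq this] show "(pick (fst \<theta> `` {e}), e) \<in> fst \<theta>"
      using eq by (meson Image_singleton_iff equiv_def symD)
  qed
  have pscar: "ps \<in> tuples (carrier F) (fa f)"
    using escar pe cong_in[OF c] by (auto simp: tuples_def ps_def)
  have la: "list_all2 (\<lambda>x y. (x, y) \<in> fst \<theta>) ps es"
    using escar pe by (auto simp: ps_def tuples_def list_all2_conv_all_nth) (metis nth_mem subsetD)
  have "(fun_of F f ps, fun_of F f es) \<in> fst \<theta>"
    using c pscar escar la unfolding is_cong_def by blast
  then have "fst \<theta> `` {fun_of F f ps} = fst \<theta> `` {fun_of F f es}"
    using eq by (simp add: equiv_class_eq)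
  moreover have fq: "fun_of (quot F \<theta>) f Xs = fst \<theta> `` {fun_of F f (map pick Xs)}" for Xs
    by (simp add: quot_def pick_def[abs_def])
  moreover have "map pick (map (eval (quot F \<theta>) \<sigma>) ts) = ps"
    using m by (simp add: ps_def)
  ultimately show ?case by (simp add: es_def comp_def)
qed

lemma eval_cong:
  assumes c: "is_cong fa ra F \<theta>" and w: "wf_struct fa ra F"
    and r1: "range \<rho> \<subseteq> carrier F" and r2: "range \<rho>' \<subseteq> carrier F"
    and rel: "\<forall>v. (\<rho> v, \<rho>' v) \<in> fst \<theta>"
  shows "wf_trm fa t \<Longrightarrow> (eval F \<rho> t, eval F \<rho>' t) \<in> fst \<theta>"
proof (induction t)
  case (Var v) then show ?case using rel by auto
next
  case (App f ts)
  have t1: "map (eval F \<rho>) ts \<in> tuples (carrier F) (fa f)"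
    using App.prems eval_carrier[OF w r1] by (auto simp: tuples_def)
  have t2: "map (eval F \<rho>') ts \<in> tuples (carrier F) (fa f)"
    using App.prems eval_carrier[OF w r2] by (auto simp: tuples_def)
  have la: "list_all2 (\<lambda>x y. (x, y) \<in> fst \<theta>) (map (eval F \<rho>) ts) (map (eval F \<rho>') ts)"
    using App by (auto simp: list_all2_conv_all_nth)
  show ?case using c t1 t2 la unfolding is_cong_def by simp
qed

lemma holds_quot:
  assumes c: "is_cong fa ra F \<theta>" and w: "wf_struct fa ra F"
    and s: "range \<sigma> \<subseteq> carrier F // fst \<theta>" and wa: "wf_atom fa ra a"
  shows "holds (quot F \<theta>) \<sigma> a = holdsC F \<theta> (pick \<circ> \<sigma>) a"
proof -
  have eq: "equiv (carrier F) (fst \<theta>)" using cong_equiv[OF c] .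
  have rng: "range (pick \<circ> \<sigma>) \<subseteq> carrier F" using s cls_pick(2)[OF eq] by auto
  note ec = eval_carrier[OF w rng]
  note eq_ = eval_quot[OF c w s]
  show ?thesis
  proof (cases a)
    case (AtEq s t)
    then show ?thesis using wa eq_ ec by (simp add: eq_equiv_class_iff[OF eq])
  next
    case (AtRel R ts)
    define es where "es = map (eval F (pick \<circ> \<sigma>)) ts"
    have escar: "set es \<subseteq> carrier F" using AtRel wa ec by (auto simp: es_def)
    have m: "map (eval (quot F \<theta>) \<sigma>) ts = map (\<lambda>x. fst \<theta> `` {x}) es"
      using AtRel wa eq_ by (auto simp: es_def)
    have "(map (\<lambda>x. fst \<theta> `` {x}) es \<in> rel_of (quot F \<theta>) R) = (es \<in> snd \<theta> R)"
    proof
      assume "map (\<lambda>x. fst \<theta> `` {x}) es \<in> rel_of (quot F \<theta>) R"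
      then obtain xs where xs: "xs \<in> snd \<theta> R" "map (\<lambda>x. fst \<theta> `` {x}) xs = map (\<lambda>x. fst \<theta> `` {x}) es"
        by (auto simp: quot_def)
      have xscar: "set xs \<subseteq> carrier F" using xs(1) c unfolding is_cong_def tuples_def by blast
      have len: "length xs = length es" using xs(2) map_eq_imp_length_eq by blast
      have "list_all2 (\<lambda>x y. (x, y) \<in> fst \<theta>) xs es"
        unfolding list_all2_conv_all_nth
      proof (intro conjI allI impI)
        fix i assume i: "i < length xs"
        have "fst \<theta> `` {xs ! i} = fst \<theta> `` {es ! i}"
          using xs(2) i len by (metis nth_map)
        then show "(xs ! i, es ! i) \<in> fst \<theta>"
          using eq_equiv_class_iff[OF eq] xscar escar i len by (metis nth_mem subsetD)
      qed (rule len)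
      then show "es \<in> snd \<theta> R" using c xs(1) unfolding is_cong_def by blast
    next
      assume "es \<in> snd \<theta> R"
      then show "map (\<lambda>x. fst \<theta> `` {x}) es \<in> rel_of (quot F \<theta>) R"
        by (auto simp: quot_def)
    qed
    moreover have "holds (quot F \<theta>) \<sigma> a = (map (\<lambda>x. fst \<theta> `` {x}) es \<in> rel_of (quot F \<theta>) R)"
      using AtRel m by (simp only: holds.simps)
    moreover have "holdsC F \<theta> (pick \<circ> \<sigma>) a = (es \<in> snd \<theta> R)" using AtRel by (simp only: es_def holdsC.simps)
    ultimately show ?thesis by (simp only:)
  qed
qed

lemma holdsC_inv:
  assumes c: "is_cong fa ra F \<theta>" and w: "wf_struct fa ra F"
    and r1: "range \<rho> \<subseteq> carrier F" and r2: "range \<rho>' \<subseteq> carrier F"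
    and rel: "\<forall>v. (\<rho> v, \<rho>' v) \<in> fst \<theta>" and wa: "wf_atom fa ra a"
    and h: "holdsC F \<theta> \<rho> a"
  shows "holdsC F \<theta> \<rho>' a"
proof -
  have eq: "equiv (carrier F) (fst \<theta>)" using cong_equiv[OF c] .
  note ev = eval_cong[OF c w r1 r2 rel]
  show ?thesis
  proof (cases a)
    case (AtEq s t)
    then have "(eval F \<rho> s, eval F \<rho>' s) \<in> fst \<theta>" "(eval F \<rho> t, eval F \<rho>' t) \<in> fst \<theta>"
      "(eval F \<rho> s, eval F \<rho> t) \<in> fst \<theta>"
      using wa ev h by auto
    then show ?thesis using AtEq eq unfolding equiv_def by (simp) (meson symD transD)
  next
    case (AtRel R ts)
    have "list_all2 (\<lambda>x y. (x, y) \<in> fst \<theta>) (map (eval F \<rho>) ts) (map (eval F \<rho>') ts)"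
      using AtRel wa ev by (auto simp: list_all2_conv_all_nth)
    then show ?thesis using AtRel h c unfolding is_cong_def by auto
  qed
qed

lemma sat_quot_iff:
  assumes c: "is_cong fa ra F \<theta>" and w: "wf_struct fa ra F" and wq: "wf_qid fa ra q"
  shows "sat_qid (quot F \<theta>) q \<longleftrightarrow>
    (\<forall>\<rho>. range \<rho> \<subseteq> carrier F \<longrightarrow> (\<forall>a \<in> set (fst q). holdsC F \<theta> \<rho> a) \<longrightarrow> holdsC F \<theta> \<rho> (snd q))"
proof -
  have eq: "equiv (carrier F) (fst \<theta>)" using cong_equiv[OF c] .
  have wa: "\<forall>a \<in> set (fst q). wf_atom fa ra a" "wf_atom fa ra (snd q)" using wq by (auto simp: wf_qid_def)
  show ?thesis
  proof
    assume S: "sat_qid (quot F \<theta>) q"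
    show "\<forall>\<rho>. range \<rho> \<subseteq> carrier F \<longrightarrow> (\<forall>a \<in> set (fst q). holdsC F \<theta> \<rho> a) \<longrightarrow> holdsC F \<theta> \<rho> (snd q)"
    proof (intro allI impI)
      fix \<rho> assume r: "range \<rho> \<subseteq> carrier F" and p: "\<forall>a \<in> set (fst q). holdsC F \<theta> \<rho> a"
      define \<sigma> where "\<sigma> = (\<lambda>v. fst \<theta> `` {\<rho> v})"
      have sr: "range \<sigma> \<subseteq> carrier F // fst \<theta>" using r by (auto simp: \<sigma>_def intro: quotientI)
      have rp: "range (pick \<circ> \<sigma>) \<subseteq> carrier F" using sr cls_pick(2)[OF eq] by auto
      have rel1: "\<forall>v. (\<rho> v, (pick \<circ> \<sigma>) v) \<in> fst \<theta>"
      proof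
        fix v
        have "\<sigma> v \<in> carrier F // fst \<theta>" using sr by auto
        then have "pick (\<sigma> v) \<in> \<sigma> v" by (rule cls_pick(1)[OF eq])
        then show "(\<rho> v, (pick \<circ> \<sigma>) v) \<in> fst \<theta>" by (simp add: \<sigma>_def)
      qed
      have rel2: "\<forall>v. ((pick \<circ> \<sigma>) v, \<rho> v) \<in> fst \<theta>"
        using rel1 eq unfolding equiv_def by (meson symD)
      have "\<forall>a \<in> set (fst q). holds (quot F \<theta>) \<sigma> a"
      proof
        fix a assume a: "a \<in> set (fst q)"
        have "holdsC F \<theta> (pick \<circ> \<sigma>) a"
          using holdsC_inv[OF c w r rp rel1] wa(1) a p by blast
        then show "holds (quot F \<theta>) \<sigma> a" using holds_quot[OF c w sr] wa(1) a by blast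
      qed
      moreover have "range \<sigma> \<subseteq> carrier (quot F \<theta>)" using sr by (simp add: quot_def)
      ultimately have "holds (quot F \<theta>) \<sigma> (snd q)" using S by (auto simp: sat_qid_def)
      then have "holdsC F \<theta> (pick \<circ> \<sigma>) (snd q)" using holds_quot[OF c w sr] wa by auto
      then show "holdsC F \<theta> \<rho> (snd q)" using holdsC_inv[OF c w rp r rel2] wa(2) by blast
    qed
  next
    assume H: "\<forall>\<rho>. range \<rho> \<subseteq> carrier F \<longrightarrow> (\<forall>a \<in> set (fst q). holdsC F \<theta> \<rho> a) \<longrightarrow> holdsC F \<theta> \<rho> (snd q)"
    show "sat_qid (quot F \<theta>) q" unfolding sat_qid_def
    proof (intro allI impI)
      fix \<sigma> assume "range \<sigma> \<subseteq> carrier (quot F \<theta>)"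
        and p: "\<forall>a \<in> set (fst q). holds (quot F \<theta>) \<sigma> a"
      then have sr: "range \<sigma> \<subseteq> carrier F // fst \<theta>" by (simp add: quot_def)
      have rp: "range (pick \<circ> \<sigma>) \<subseteq> carrier F" using sr cls_pick(2)[OF eq] by auto
      have "\<forall>a \<in> set (fst q). holdsC F \<theta> (pick \<circ> \<sigma>) a"
        using p holds_quot[OF c w sr] wa(1) by blast
      then have "holdsC F \<theta> (pick \<circ> \<sigma>) (snd q)" using H rp by blast
      then show "holds (quot F \<theta>) \<sigma> (snd q)"
        using holds_quot[OF c w sr] wa(2) by blast
    qed
  qed
qed

lemma wf_quot:
  assumes c: "is_cong fa ra F \<theta>"
  shows "wf_struct fa ra (quot F \<theta>)"
proof -
  have eq: "equiv (carrier F) (fst \<theta>)" using cong_equiv[OF c] .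
  have "fun_of (quot F \<theta>) f xs \<in> carrier (quot F \<theta>)"
    if "xs \<in> tuples (carrier (quot F \<theta>)) (fa f)" for f xs
  proof -
    have "set (map pick xs) \<subseteq> carrier F"
      using that cls_pick(2)[OF eq] by (auto simp: tuples_def quot_def)
    then have "map pick xs \<in> tuples (carrier F) (fa f)" using that by (auto simp: tuples_def)
    moreover have "list_all2 (\<lambda>x y. (x, y) \<in> fst \<theta>) (map pick xs) (map pick xs)"
      unfolding list_all2_conv_all_nth
    proof (intro conjI allI impI)
      fix i assume i: "i < length (map pick xs)"
      then have "map pick xs ! i \<in> carrier F" using calculation by (auto simp: tuples_def)
      then show "(map pick xs ! i, map pick xs ! i) \<in> fst \<theta>"
        using eq by (simp add: equiv_def refl_on_def)
    qed simp
    ultimately have "(fun_of F f (map pick xs), fun_of F f (map pick xs)) \<in> fst \<theta>"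
      using c unfolding is_cong_def by blast
    then have "fun_of F f (map pick xs) \<in> carrier F" using cong_in[OF c] by blast
    then show ?thesis by (simp add: quot_def pick_def[abs_def] quotientI)
  qed
  moreover have "rel_of (quot F \<theta>) R \<subseteq> tuples (carrier (quot F \<theta>)) (ra R)" for R
  proof
    fix ys assume "ys \<in> rel_of (quot F \<theta>) R"
    then obtain xs where xs: "xs \<in> snd \<theta> R" "ys = map (\<lambda>x. fst \<theta> `` {x}) xs"
      by (auto simp: quot_def)
    have "xs \<in> tuples (carrier F) (ra R)" using c xs(1) unfolding is_cong_def by blast
    then show "ys \<in> tuples (carrier (quot F \<theta>)) (ra R)"
      using xs(2) by (auto simp: tuples_def quot_def intro: quotientI)
  qed
  ultimately show ?thesis by (simp add: wf_struct_def)
qed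


definition pb :: "('a, 'f, 'r) struct \<Rightarrow> ('r \<Rightarrow> nat) \<Rightarrow> ('a \<Rightarrow> 'a) \<Rightarrow> ('a, 'r) cong \<Rightarrow> ('a, 'r) cong" where
  "pb F ra \<epsilon> \<phi> = ({(x, y). x \<in> carrier F \<and> y \<in> carrier F \<and> (\<epsilon> x, \<epsilon> y) \<in> fst \<phi>},
     \<lambda>R. {xs \<in> tuples (carrier F) (ra R). map \<epsilon> xs \<in> snd \<phi> R})"

lemma pb_cong:
  assumes w: "wf_struct fa ra F" and h: "hom fa ra F F \<epsilon>" and c: "is_cong fa ra F \<phi>"
  shows "is_cong fa ra F (pb F ra \<epsilon> \<phi>)"
proof -
  have eq: "equiv (carrier F) (fst \<phi>)" using cong_equiv[OF c] .
  have ec: "\<epsilon> x \<in> carrier F" if "x \<in> carrier F" for x using h that by (auto simp: hom_def)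
  have tm: "map \<epsilon> xs \<in> tuples (carrier F) n" if "xs \<in> tuples (carrier F) n" for xs n
    using that ec by (auto simp: tuples_def)
  have la: "list_all2 (\<lambda>x y. (x, y) \<in> fst \<phi>) (map \<epsilon> xs) (map \<epsilon> ys)"
    if "list_all2 (\<lambda>x y. (x, y) \<in> fst (pb F ra \<epsilon> \<phi>)) xs ys" for xs ys
    using that by (auto simp: pb_def list_all2_conv_all_nth)
  have rf: "\<forall>x \<in> carrier F. (x, x) \<in> fst \<phi>" and sy: "sym (fst \<phi>)" and tr: "trans (fst \<phi>)"
    using eq unfolding equiv_def refl_on_def by auto
  have "refl_on (carrier F) (fst (pb F ra \<epsilon> \<phi>))"
    unfolding refl_on_def pb_def using rf ec by auto
  moreover have "sym (fst (pb F ra \<epsilon> \<phi>))"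
    unfolding pb_def using sy by (auto intro!: symI dest: symD)
  moreover have "trans (fst (pb F ra \<epsilon> \<phi>))"
    unfolding pb_def using tr by (auto intro!: transI dest: transD)
  moreover have "fst (pb F ra \<epsilon> \<phi>) \<subseteq> carrier F \<times> carrier F" by (auto simp: pb_def)
  ultimately have "equiv (carrier F) (fst (pb F ra \<epsilon> \<phi>))" by (simp add: equiv_def)
  moreover have "(fun_of F f xs, fun_of F f ys) \<in> fst (pb F ra \<epsilon> \<phi>)"
    if "xs \<in> tuples (carrier F) (fa f)" "ys \<in> tuples (carrier F) (fa f)"
       "list_all2 (\<lambda>x y. (x, y) \<in> fst (pb F ra \<epsilon> \<phi>)) xs ys" for f xs ys
  proof -
    have "(fun_of F f (map \<epsilon> xs), fun_of F f (map \<epsilon> ys)) \<in> fst \<phi>"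
      using c tm[OF that(1)] tm[OF that(2)] la[OF that(3)] unfolding is_cong_def by blast
    moreover have "\<epsilon> (fun_of F f xs) = fun_of F f (map \<epsilon> xs)" "\<epsilon> (fun_of F f ys) = fun_of F f (map \<epsilon> ys)"
      using h that(1,2) by (auto simp: hom_def)
    moreover have "fun_of F f xs \<in> carrier F" "fun_of F f ys \<in> carrier F"
      using w that(1,2) by (auto simp: wf_struct_def)
    ultimately show ?thesis by (simp add: pb_def)
  qed
  moreover have "rel_of F R \<subseteq> snd (pb F ra \<epsilon> \<phi>) R" for R
  proof
    fix xs assume x: "xs \<in> rel_of F R"
    then have "xs \<in> tuples (carrier F) (ra R)" using w by (auto simp: wf_struct_def)
    moreover have "map \<epsilon> xs \<in> rel_of F R" using h x by (auto simp: hom_def)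
    then have "map \<epsilon> xs \<in> snd \<phi> R" using c by (auto simp: is_cong_def)
    ultimately show "xs \<in> snd (pb F ra \<epsilon> \<phi>) R" by (simp add: pb_def)
  qed
  moreover have "ys \<in> snd (pb F ra \<epsilon> \<phi>) R"
    if "xs \<in> snd (pb F ra \<epsilon> \<phi>) R" "list_all2 (\<lambda>x y. (x, y) \<in> fst (pb F ra \<epsilon> \<phi>)) xs ys" for R xs ys
  proof -
    note la2 = that(2)
    have "map \<epsilon> xs \<in> snd \<phi> R" using that(1) by (simp add: pb_def)
    then have "map \<epsilon> ys \<in> snd \<phi> R" using c la[OF that(2)] unfolding is_cong_def by blast
    moreover have "xs \<in> tuples (carrier F) (ra R)" using that(1) by (simp add: pb_def)
    then have "ys \<in> tuples (carrier F) (ra R)"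
    proof -
      assume xt: "xs \<in> tuples (carrier F) (ra R)"
      have len: "length ys = length xs" using la2 list_all2_lengthD by metis
      have "y \<in> carrier F" if y: "y \<in> set ys" for y
      proof -
        obtain i where i: "i < length ys" "y = ys ! i" using y by (metis in_set_conv_nth)
        then have "(xs ! i, ys ! i) \<in> fst (pb F ra \<epsilon> \<phi>)"
          using la2 len by (simp add: list_all2_conv_all_nth)
        then show ?thesis using i by (simp add: pb_def)
      qed
      then show ?thesis using xt len by (auto simp: tuples_def)
    qed
    ultimately show ?thesis by (simp add: pb_def)
  qed
  moreover have "snd (pb F ra \<epsilon> \<phi>) R \<subseteq> tuples (carrier F) (ra R)" for R
    by (auto simp: pb_def)
  ultimately show ?thesis unfolding is_cong_def by blast
qed

lemma pb_holdsC:
  assumes w: "wf_struct fa ra F" and h: "hom fa ra F F \<epsilon>"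
    and r: "range \<rho> \<subseteq> carrier F" and wa: "wf_atom fa ra a"
  shows "holdsC F (pb F ra \<epsilon> \<phi>) \<rho> a = holdsC F \<phi> (\<epsilon> \<circ> \<rho>) a"
proof (cases a)
  case (AtEq s t)
  then show ?thesis using wa eval_carrier[OF w r] eval_hom[OF h w r] by (simp add: pb_def)
next
  case (AtRel R ts)
  have "map (eval F \<rho>) ts \<in> tuples (carrier F) (ra R)"
    using AtRel wa eval_carrier[OF w r] by (auto simp: tuples_def)
  moreover have "map \<epsilon> (map (eval F \<rho>) ts) = map (eval F (\<epsilon> \<circ> \<rho>)) ts"
    using AtRel wa eval_hom[OF h w r] by auto
  ultimately have "(map (eval F \<rho>) ts \<in> snd (pb F ra \<epsilon> \<phi>) R) = (map (eval F (\<epsilon> \<circ> \<rho>)) ts \<in> snd \<phi> R)"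
    unfolding pb_def snd_conv mem_Collect_eq by metis
  then show ?thesis using AtRel by simp
qed

lemma pb_Kcong:
  assumes K: "\<forall>q \<in> \<Sigma>. wf_qid fa ra q" and iF: "inK fa ra \<Sigma> F" and h: "hom fa ra F F \<epsilon>"
    and c: "is_Kcong fa ra \<Sigma> F \<phi>"
  shows "is_Kcong fa ra \<Sigma> F (pb F ra \<epsilon> \<phi>)"
proof -
  have w: "wf_struct fa ra F" using iF by (simp add: inK_def)
  have c0: "is_cong fa ra F \<phi>" using c by (simp add: is_Kcong_def)
  have c1: "is_cong fa ra F (pb F ra \<epsilon> \<phi>)" by (rule pb_cong[OF w h c0])
  have ec: "range (\<epsilon> \<circ> \<rho>) \<subseteq> carrier F" if "range \<rho> \<subseteq> carrier F" for \<rho> :: "nat \<Rightarrow> _"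
    using that h by (auto simp: hom_def)
  have "sat_qid (quot F (pb F ra \<epsilon> \<phi>)) q" if q: "q \<in> \<Sigma>" for q
  proof -
    have wq: "wf_qid fa ra q" using K q by blast
    have wa: "\<forall>a \<in> set (fst q). wf_atom fa ra a" "wf_atom fa ra (snd q)" using wq by (auto simp: wf_qid_def)
    have "sat_qid (quot F \<phi>) q" using c q by (simp add: is_Kcong_def inK_def)
    then have H: "\<forall>\<rho>. range \<rho> \<subseteq> carrier F \<longrightarrow> (\<forall>a \<in> set (fst q). holdsC F \<phi> \<rho> a) \<longrightarrow> holdsC F \<phi> \<rho> (snd q)"
      using sat_quot_iff[OF c0 w wq] by blast
    show ?thesis unfolding sat_quot_iff[OF c1 w wq]
    proof (intro allI impI)
      fix \<rho> assume r: "range \<rho> \<subseteq> carrier F" and p: "\<forall>a \<in> set (fst q). holdsC F (pb F ra \<epsilon> \<phi>) \<rho> a"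
      have "\<forall>a \<in> set (fst q). holdsC F \<phi> (\<epsilon> \<circ> \<rho>) a" using p pb_holdsC[OF w h r] wa(1) by blast
      then have "holdsC F \<phi> (\<epsilon> \<circ> \<rho>) (snd q)" using H ec[OF r] by blast
      then show "holdsC F (pb F ra \<epsilon> \<phi>) \<rho> (snd q)" using pb_holdsC[OF w h r] wa(2) by blast
    qed
  qed
  then show ?thesis using c1 wf_quot[OF c1] by (simp add: is_Kcong_def inK_def)
qed

lemma le_Inf: "(\<And>\<phi>. \<phi> \<in> \<Phi> \<Longrightarrow> cong_le A \<phi>) \<Longrightarrow> cong_le A (cong_Inf \<Phi>)"
  unfolding cong_le_def cong_Inf_def by auto blast

lemma Inf_le: "\<phi> \<in> \<Phi> \<Longrightarrow> cong_le (cong_Inf \<Phi>) \<phi>"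
  by (auto simp: cong_le_def cong_Inf_def)

lemma in_Inf: "(\<And>\<phi>. \<phi> \<in> \<Phi> \<Longrightarrow> in_cong x \<phi>) \<Longrightarrow> in_cong x (cong_Inf \<Phi>)"
  by (cases x) (auto simp: cong_Inf_def)

lemma le_trans': "cong_le a b \<Longrightarrow> cong_le b c \<Longrightarrow> cong_le a c"
  unfolding cong_le_def by blast

lemma in_le: "in_cong x \<psi> \<Longrightarrow> cong_le \<psi> \<phi> \<Longrightarrow> in_cong x \<phi>"
  by (cases x) (auto simp: cong_le_def)

lemma in_conK: "in_cong x (conK fa ra \<Sigma> F {x})"
  unfolding conK_def by (rule in_Inf) auto

lemma conK_le: "is_Kcong fa ra \<Sigma> F \<phi> \<Longrightarrow> in_cong x \<phi> \<Longrightarrow> cong_le (conK fa ra \<Sigma> F {x}) \<phi>"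
  unfolding conK_def by (rule Inf_le) auto

lemma in_pb: "in_cong x (pb F ra \<epsilon> \<phi>) \<Longrightarrow> in_cong (map_afml \<epsilon> x) \<phi>"
  by (cases x) (auto simp: pb_def)

lemma in_pb2: "wf_afml ra F x \<Longrightarrow> in_cong (map_afml \<epsilon> x) \<phi> \<Longrightarrow> in_cong x (pb F ra \<epsilon> \<phi>)"
  by (cases x) (auto simp: pb_def)

theorem lemma3p1:
  fixes fa :: "'f \<Rightarrow> nat" and ra :: "'r \<Rightarrow> nat"
    and \<Sigma> :: "('f, 'r) qid set"
    and F :: "('a, 'f, 'r) struct"
    and \<epsilon> :: "'a \<Rightarrow> 'a"
    and \<alpha> :: "('a, 'r) afml" and \<beta> :: "nat \<Rightarrow> ('a, 'r) afml" and m :: nat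
  assumes K: "\<forall>q \<in> \<Sigma>. wf_qid fa ra q"
    and free: "Kfree fa ra \<Sigma> F TYPE('b)"
    and endo: "endo fa ra F \<epsilon>"
    and wf\<alpha>: "wf_afml ra F \<alpha>"
    and wf\<beta>: "\<forall>j \<in> {1..m}. wf_afml ra F (\<beta> j)"
    and le: "cong_le (conK fa ra \<Sigma> F {\<alpha>})
                     (KSup fa ra \<Sigma> F {conK fa ra \<Sigma> F {\<beta> j} | j. j \<in> {1..m}})"
  shows "cong_le (conK fa ra \<Sigma> F {map_afml \<epsilon> \<alpha>})
                 (KSup fa ra \<Sigma> F {conK fa ra \<Sigma> F {map_afml \<epsilon> (\<beta> j)} | j. j \<in> {1..m}})"
proof -
  have iF: "inK fa ra \<Sigma> F" using free by (simp add: Kfree_def)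
  have h: "hom fa ra F F \<epsilon>" using endo by (simp add: endo_def)
  show ?thesis unfolding KSup_def
  proof (rule le_Inf)
    fix \<phi> assume "\<phi> \<in> {\<phi>. is_Kcong fa ra \<Sigma> F \<phi> \<and>
        (\<forall>\<psi> \<in> {conK fa ra \<Sigma> F {map_afml \<epsilon> (\<beta> j)} | j. j \<in> {1..m}}. cong_le \<psi> \<phi>)}"
    then have \<phi>K: "is_Kcong fa ra \<Sigma> F \<phi>"
      and \<phi>b0: "\<forall>\<psi> \<in> {conK fa ra \<Sigma> F {map_afml \<epsilon> (\<beta> j)} | j. j \<in> {1..m}}. cong_le \<psi> \<phi>" by auto
    have \<phi>b: "\<And>j. j \<in> {1..m} \<Longrightarrow> cong_le (conK fa ra \<Sigma> F {map_afml \<epsilon> (\<beta> j)}) \<phi>"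
      using \<phi>b0 by blast
    have pK: "is_Kcong fa ra \<Sigma> F (pb F ra \<epsilon> \<phi>)" by (rule pb_Kcong[OF K iF h \<phi>K])
    have "cong_le (conK fa ra \<Sigma> F {\<beta> j}) (pb F ra \<epsilon> \<phi>)" if j: "j \<in> {1..m}" for j
    proof -
      have "in_cong (map_afml \<epsilon> (\<beta> j)) \<phi>" using in_le[OF in_conK \<phi>b[OF j]] .
      then have "in_cong (\<beta> j) (pb F ra \<epsilon> \<phi>)" using in_pb2 wf\<beta> j by blast
      then show ?thesis by (rule conK_le[OF pK])
    qed
    then have "cong_le (KSup fa ra \<Sigma> F {conK fa ra \<Sigma> F {\<beta> j} | j. j \<in> {1..m}}) (pb F ra \<epsilon> \<phi>)"
      unfolding KSup_def using pK by (intro Inf_le) blast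
    then have "cong_le (conK fa ra \<Sigma> F {\<alpha>}) (pb F ra \<epsilon> \<phi>)"
      by (rule le_trans'[OF le])
    then have "in_cong \<alpha> (pb F ra \<epsilon> \<phi>)" using in_le[OF in_conK] by blast
    then have "in_cong (map_afml \<epsilon> \<alpha>) \<phi>" by (rule in_pb)
    then show "cong_le (conK fa ra \<Sigma> F {map_afml \<epsilon> \<alpha>}) \<phi>" by (rule conK_le[OF \<phi>K])
  qed
qed

end
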